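(* Assume the setting in the context, with a decomposition of $\mathcal X$ over $A$, $g\in\mathcal G_s$ and an integer $T>0$. Let $\mathcal V$ be any subspace of $\mathcal U$ with $\mathcal U=\big(\bigoplus_{i\in\mathcal I}\mathcal E_i\big)\oplus\mathcal V$. If $\{(A,B|_{\mathcal E_i},g,T)\}_{i\in\mathcal I}$ is a decomposition (Definition 1) of $(A,B,g,T)$, then $A(\mathcal X)\cap B(\mathcal V)=\{0\}$.
   Context: Let $\mathcal F$ be a field and $\mathcal X,\mathcal U$ finite-dimensional vector spaces over $\mathcal F$. Let $A:\mathcal X\to\mathcal X$ and $B:\mathcal U\to\mathcal X$ be linear maps with $B$ injective, and consider $x_{t+1}=Ax_t+Bu_t$ and a cost $g:\mathcal X\to\mathbb R_{\ge0}$ with $g(x)=0\iff x=0$. Standing assumption: all minima appearing below are attained. Finite-horizon problem $(A,B,g,T)$: policies $\pi(x_0)=(\pi_t(x_0))_{t=0}^{T-1}\in\mathcal U^T$, cost $J(x_0,\pi)=\sum_{t=0}^Tg(x_t)$ with $x_{t+1}=Ax_t+B\pi_t(x_0)$; $J^*(x_0)=\min_\pi J(x_0,\pi)$; minimizing policies are optimal. A decomposition of $\mathcal X$ over $A$ is a direct sum $\mathcal X=\mathcal X_1\oplus\cdots\oplus\mathcal X_r$ with $r>1$ and $A\mathcal X_i\subseteq\mathcal X_i$, $i\in\mathcal I=\{1,\dots,r\}$; $\rho_i:\mathcal X\to\mathcal X_i$ is the projection along the other summands. $\mathcal G_s$ is the set of $h:\mathcal X\to\mathbb R_{\ge0}$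 with $h(x)=\sum_i h(\rho_i(x))$ for all $x$. $\mathcal E_i=\{u\in\mathcal U:Bu\in\mathcal X_i\}$ (the sum of the $\mathcal E_i$ is direct since $B$ is injective). Subproblem $(A,B|_{\mathcal E_i},g,T)$: same problem for $x_{i,t+1}=Ax_{i,t}+B\bar u_{i,t}$ with states in $\mathcal X_i$ and inputs in $\mathcal E_i$; optimal cost $\bar J_i^*$, optimal policies $\bar\pi_i^*$. Definition 1: the family is a decomposition of $(A,B,g,T)$ if for every $x$: $J^*(x)=\sum_i\bar J_i^*(\rho_i(x))$, and for every choice of optimal policies $\bar\pi_i^*(\rho_i(x))$ there is an optimal policy $\pi^*(x)$ with $\pi^*(x)=\sum_i\bar\pi_i^*(\rho_i(x))$. *)

theory Defs
  imports Complex_Main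
begin

text \<open>The state space X is the whole type 'x, the input space U the whole type 'u,
  both vector spaces over the field 'f with scalar multiplications sX, sU.\<close>

definition direct_sum_decomp :: "('f::field \<Rightarrow> 'x \<Rightarrow> 'x::ab_group_add) \<Rightarrow> 'i set \<Rightarrow> ('i \<Rightarrow> 'x set) \<Rightarrow> bool" where
  "direct_sum_decomp sX I Xs \<longleftrightarrow>
     finite I \<and>
     (\<forall>i\<in>I. module.subspace sX (Xs i)) \<and>
     (\<forall>x. \<exists>f. (\<forall>i\<in>I. f i \<in> Xs i) \<and> x = sum f I) \<and>
     (\<forall>f. (\<forall>i\<in>I. f i \<in> Xs i) \<and> sum f I = 0 \<longrightarrow> (\<forall>i\<in>I. f i = 0))"

definition decomp_over :: "('f::field \<Rightarrow> 'x \<Rightarrow> 'x::ab_group_add) \<Rightarrow> ('x \<Rightarrow> 'x) \<Rightarrow> nat \<Rightarrow> (nat \<Rightarrow> 'x set) \<Rightarrow> bool" where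
  "decomp_over sX A r Xs \<longleftrightarrow> r > 1 \<and> direct_sum_decomp sX {1..r} Xs \<and> (\<forall>i\<in>{1..r}. A ` Xs i \<subseteq> Xs i)"

definition proj :: "'i set \<Rightarrow> ('i \<Rightarrow> 'x::ab_group_add set) \<Rightarrow> 'i \<Rightarrow> 'x \<Rightarrow> 'x" where
  "proj I Xs i x = (THE y. \<exists>f. (\<forall>j\<in>I. f j \<in> Xs j) \<and> sum f I = x \<and> f i = y)"

definition separable_cost :: "'i set \<Rightarrow> ('i \<Rightarrow> 'x::ab_group_add set) \<Rightarrow> ('x \<Rightarrow> real) \<Rightarrow> bool" where
  "separable_cost I Xs h \<longleftrightarrow> (\<forall>x. h x \<ge> 0) \<and> (\<forall>x. h x = (\<Sum>i\<in>I. h (proj I Xs i x)))"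

fun traj :: "('x \<Rightarrow> 'x::plus) \<Rightarrow> ('u \<Rightarrow> 'x) \<Rightarrow> 'x \<Rightarrow> (nat \<Rightarrow> 'u) \<Rightarrow> nat \<Rightarrow> 'x" where
  "traj A B x0 u 0 = x0"
| "traj A B x0 u (Suc t) = A (traj A B x0 u t) + B (u t)"

text \<open>Cost J(x0, pi) = sum_{t=0}^T g(x_t); a policy evaluated at x0 is an input
  sequence (u_0,...,u_{T-1}), represented as a function on nat of which only
  the values at t < T matter.\<close>
definition cost :: "('x \<Rightarrow> 'x::plus) \<Rightarrow> ('u \<Rightarrow> 'x) \<Rightarrow> ('x \<Rightarrow> real) \<Rightarrow> nat \<Rightarrow> 'x \<Rightarrow> (nat \<Rightarrow> 'u) \<Rightarrow> real" where
  "cost A B g T x0 u = (\<Sum>t\<le>T. g (traj A B x0 u t))"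

definition admissible :: "'u set \<Rightarrow> nat \<Rightarrow> (nat \<Rightarrow> 'u) \<Rightarrow> bool" where
  "admissible S T u \<longleftrightarrow> (\<forall>t<T. u t \<in> S)"

definition optimal :: "('x \<Rightarrow> 'x::plus) \<Rightarrow> ('u \<Rightarrow> 'x) \<Rightarrow> 'u set \<Rightarrow> ('x \<Rightarrow> real) \<Rightarrow> nat \<Rightarrow> 'x \<Rightarrow> (nat \<Rightarrow> 'u) \<Rightarrow> bool" where
  "optimal A B S g T x0 u \<longleftrightarrow> admissible S T u \<and>
     (\<forall>v. admissible S T v \<longrightarrow> cost A B g T x0 u \<le> cost A B g T x0 v)"

text \<open>Optimal cost J*(x0) (a minimum, under the standing attainment assumption).\<close>
definition opt_cost :: "('x \<Rightarrow> 'x::plus) \<Rightarrow> ('u \<Rightarrow> 'x) \<Rightarrow> 'u set \<Rightarrow> ('x \<Rightarrow> real) \<Rightarrow> nat \<Rightarrow> 'x \<Rightarrow> real" where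
  "opt_cost A B S g T x0 = (INF u \<in> {u. admissible S T u}. cost A B g T x0 u)"

definition Eset :: "('u \<Rightarrow> 'x) \<Rightarrow> 'x set \<Rightarrow> 'u set" where
  "Eset B Xi = {u. B u \<in> Xi}"

definition is_problem_decomp :: "('x \<Rightarrow> 'x::ab_group_add) \<Rightarrow> ('u::ab_group_add \<Rightarrow> 'x) \<Rightarrow> ('x \<Rightarrow> real) \<Rightarrow> nat \<Rightarrow> 'i set \<Rightarrow> ('i \<Rightarrow> 'x set) \<Rightarrow> bool" where
  "is_problem_decomp A B g T I Xs \<longleftrightarrow>
    (\<forall>x. opt_cost A B UNIV g T x = (\<Sum>i\<in>I. opt_cost A B (Eset B (Xs i)) g T (proj I Xs i x))) \<and>
    (\<forall>x. \<forall>ubar. (\<forall>i\<in>I. optimal A B (Eset B (Xs i)) g T (proj I Xs i x) (ubar i)) \<longrightarrow>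
        (\<exists>u. optimal A B UNIV g T x u \<and> (\<forall>t<T. u t = (\<Sum>i\<in>I. ubar i t))))"

end

theory Submission
  imports Defs
begin

lemma proj_facts:
  fixes sX :: "'f::field \<Rightarrow> 'x::ab_group_add \<Rightarrow> 'x"
  assumes ms: "module sX" and d: "direct_sum_decomp sX I Xs"
  shows "(\<forall>i\<in>I. proj I Xs i x \<in> Xs i) \<and> (\<Sum>i\<in>I. proj I Xs i x) = x"
proof -
  from d obtain f where f: "\<forall>i\<in>I. f i \<in> Xs i" "x = sum f I"
    unfolding direct_sum_decomp_def by blast
  have eq: "proj I Xs i x = f i" if i: "i \<in> I" for i
    unfolding proj_def
  proof (rule the_equality)
    show "\<exists>fa. (\<forall>j\<in>I. fa j \<in> Xs j) \<and> sum fa I = x \<and> fa i = f i" using f by auto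
  next
    fix y assume "\<exists>fa. (\<forall>j\<in>I. fa j \<in> Xs j) \<and> sum fa I = x \<and> fa i = y"
    then obtain h where h: "\<forall>j\<in>I. h j \<in> Xs j" "sum h I = x" "h i = y" by blast
    have "\<forall>j\<in>I. (\<lambda>j. h j - f j) j \<in> Xs j"
      using h f d ms unfolding direct_sum_decomp_def by (auto intro: module.subspace_diff)
    moreover have "sum (\<lambda>j. h j - f j) I = 0" using h f by (simp add: sum_subtractf)
    ultimately have "h i - f i = 0" using d i unfolding direct_sum_decomp_def
      by (metis (no_types, lifting))
    then show "y = f i" using h by simp
  qed
  show ?thesis using eq f by (auto intro: sum.cong)
qed

lemma opt_cost_eq:
  assumes "optimal A B S g T x u"
  shows "opt_cost A B S g T x = cost A B g T x u"
  unfolding opt_cost_def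
  using assms unfolding optimal_def
  by (intro cInf_eq_minimum) auto

theorem proposition5:
  fixes sX :: "'f::field \<Rightarrow> 'x::ab_group_add \<Rightarrow> 'x"
    and sU :: "'f \<Rightarrow> 'u::ab_group_add \<Rightarrow> 'u"
    and bX :: "'x set" and bU :: "'u set"
    and A :: "'x \<Rightarrow> 'x" and B :: "'u \<Rightarrow> 'x"
    and g :: "'x \<Rightarrow> real"
    and r T :: nat and Xs :: "nat \<Rightarrow> 'x set" and V :: "'u set"
  assumes fdX: "finite_dimensional_vector_space sX bX"
    and fdU: "finite_dimensional_vector_space sU bU"
    and linA: "Vector_Spaces.linear sX sX A"
    and linB: "Vector_Spaces.linear sU sX B"
    and injB: "inj B"
    and g_zero: "\<forall>x. g x = 0 \<longleftrightarrow> x = 0"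
    and dec: "decomp_over sX A r Xs"
    and gsep: "separable_cost {1..r} Xs g"
    and Tpos: "T > 0"
    and attained_full: "\<forall>x. \<exists>u. optimal A B UNIV g T x u"
    and attained_sub: "\<forall>i\<in>{1..r}. \<forall>x\<in>Xs i. \<exists>u. optimal A B (Eset B (Xs i)) g T x u"
    and V_sub: "module.subspace sU V"
    and V_span: "\<forall>u. \<exists>e v. (\<forall>i\<in>{1..r}. e i \<in> Eset B (Xs i)) \<and> v \<in> V \<and> u = (\<Sum>i\<in>{1..r}. e i) + v"
    and V_indep: "\<forall>e v. (\<forall>i\<in>{1..r}. e i \<in> Eset B (Xs i)) \<and> v \<in> V \<and> (\<Sum>i\<in>{1..r}. e i) + v = 0
                    \<longrightarrow> v = 0"
    and pdec: "is_problem_decomp A B g T {1..r} Xs"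
  shows "range A \<inter> B ` V = {0}"
proof -
  have Aadd: "\<And>x y. A (x + y) = A x + A y" using linA unfolding Vector_Spaces.linear_iff by blast
  have Badd: "\<And>x y. B (x + y) = B x + B y" using linB unfolding Vector_Spaces.linear_iff by blast
  have A0: "A 0 = 0" using Aadd[of 0 0] by simp
  have B0: "B 0 = 0" using Badd[of 0 0] by simp
  have Bneg: "B (- v) = - B v" for v using Badd[of v "- v"] B0 by (simp add: eq_neg_iff_add_eq_0 add.commute)
  have Asum: "A (sum f S) = (\<Sum>i\<in>S. A (f i))" for f :: "nat \<Rightarrow> 'x" and S
    by (induct S rule: infinite_finite_induct) (auto simp: A0 Aadd)
  have Bsum: "B (sum f S) = (\<Sum>i\<in>S. B (f i))" for f :: "nat \<Rightarrow> 'u" and S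
    by (induct S rule: infinite_finite_induct) (auto simp: B0 Badd)
  have msX: "module sX" using fdX
    by (simp add: finite_dimensional_vector_space_def vector_space_def module_def)
  have ds: "direct_sum_decomp sX {1..r} Xs" using dec unfolding decomp_over_def by blast
  have gnn: "\<And>x. g x \<ge> 0" using gsep unfolding separable_cost_def by blast
  have msU: "module sU" using fdU
    by (simp add: finite_dimensional_vector_space_def vector_space_def module_def)
  have V0: "0 \<in> V" using module.subspace_0[OF msU V_sub] .
  have "y = 0" if yin: "y \<in> range A" "y \<in> B ` V" for y
  proof -
    obtain x0 where x0: "y = A x0" using yin by blast
    obtain v where v: "v \<in> V" "y = B v" using yin by blast
    obtain n where Tn: "T = Suc n" using Tpos gr0_implies_Suc by blast
    define u0 where "u0 = (\<lambda>t::nat. if t = 0 then - v else 0)"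
    have tr0: "traj A B x0 u0 (Suc t) = 0" for t
      by (induct t) (auto simp: u0_def Bneg x0[symmetric] v A0 B0)
    have g0: "g 0 = 0" using g_zero by simp
    have tr00: "traj A B x0 u0 0 = x0" by simp
    have "cost A B g T x0 u0 = g x0"
      unfolding cost_def Tn sum.atMost_Suc_shift by (simp only: tr0 g0 tr00) simp
    moreover obtain us where us: "optimal A B UNIV g T x0 us" using attained_full by blast
    ultimately have full: "opt_cost A B UNIV g T x0 \<le> g x0"
    proof -
      have "cost A B g T x0 us \<le> cost A B g T x0 u0"
        using us unfolding optimal_def admissible_def by blast
      thus ?thesis using opt_cost_eq[OF us] \<open>cost A B g T x0 u0 = g x0\<close> by linarith
    qed
    let ?p = "\<lambda>i. proj {1..r} Xs i x0"
    have pf: "(\<forall>i\<in>{1..r}. ?p i \<in> Xs i) \<and> (\<Sum>i\<in>{1..r}. ?p i) = x0"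
      using proj_facts[OF msX ds] by blast
    have "\<forall>i\<in>{1..r}. \<exists>u. optimal A B (Eset B (Xs i)) g T (?p i) u"
    proof
      fix i assume i: "i \<in> {1..r}"
      have "?p i \<in> Xs i" using pf i by blast
      thus "\<exists>u. optimal A B (Eset B (Xs i)) g T (?p i) u" using attained_sub i by blast
    qed
    from bchoice[OF this] obtain ub where ubb: "\<forall>i\<in>{1..r}. optimal A B (Eset B (Xs i)) g T (?p i) (ub i)"
      by blast
    have ub: "\<And>i. i \<in> {1..r} \<Longrightarrow> optimal A B (Eset B (Xs i)) g T (?p i) (ub i)" using ubb by blast
    let ?x1 = "\<lambda>i. traj A B (?p i) (ub i) 1"
    have lb: "opt_cost A B (Eset B (Xs i)) g T (?p i) \<ge> g (?p i) + g (?x1 i)" if i: "i \<in> {1..r}" for i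
    proof -
      have "cost A B g T (?p i) (ub i) = g (?p i) + g (?x1 i) + (\<Sum>t<n. g (traj A B (?p i) (ub i) (Suc (Suc t))))"
        unfolding cost_def Tn sum.atMost_Suc_shift lessThan_Suc_atMost[symmetric] sum.lessThan_Suc_shift
        by simp
      moreover have "(\<Sum>t<n. g (traj A B (?p i) (ub i) (Suc (Suc t)))) \<ge> 0" by (simp add: gnn sum_nonneg)
      ultimately show ?thesis using opt_cost_eq[OF ub[OF i]] by simp
    qed
    have "(\<Sum>i\<in>{1..r}. opt_cost A B (Eset B (Xs i)) g T (?p i)) \<le> g x0"
    proof -
      have "opt_cost A B UNIV g T x0 = (\<Sum>i\<in>{1..r}. opt_cost A B (Eset B (Xs i)) g T (?p i))"
        using pdec unfolding is_problem_decomp_def by blast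
      thus ?thesis using full by linarith
    qed
    also have "g x0 = (\<Sum>i\<in>{1..r}. g (?p i))" using gsep unfolding separable_cost_def by blast
    finally have "(\<Sum>i\<in>{1..r}. opt_cost A B (Eset B (Xs i)) g T (?p i)) \<le> (\<Sum>i\<in>{1..r}. g (?p i))" .
    moreover have "(\<Sum>i\<in>{1..r}. g (?p i) + g (?x1 i)) \<le> (\<Sum>i\<in>{1..r}. opt_cost A B (Eset B (Xs i)) g T (?p i))"
      using lb by (intro sum_mono) auto
    ultimately have "(\<Sum>i\<in>{1..r}. g (?x1 i)) \<le> 0" by (simp add: sum.distrib)
    hence "(\<Sum>i\<in>{1..r}. g (?x1 i)) = 0" by (simp add: gnn sum_nonneg antisym)
    hence z: "\<forall>i\<in>{1..r}. g (?x1 i) = 0" by (subst (asm) sum_nonneg_eq_0_iff) (auto simp: gnn)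
    have x1z: "A (?p i) + B (ub i 0) = 0" if "i \<in> {1..r}" for i
      using z that g_zero by simp
    have "A x0 + B (\<Sum>i\<in>{1..r}. ub i 0) = 0"
    proof -
      have "A x0 + B (\<Sum>i\<in>{1..r}. ub i 0) = (\<Sum>i\<in>{1..r}. A (?p i) + B (ub i 0))"
      proof -
        have "A x0 = A (\<Sum>i\<in>{1..r}. ?p i)" using pf by simp
        also have "\<dots> = (\<Sum>i\<in>{1..r}. A (?p i))" by (rule Asum)
        finally show ?thesis by (simp add: Bsum sum.distrib)
      qed
      also have "\<dots> = 0" using x1z by simp
      finally show ?thesis .
    qed
    hence "B ((\<Sum>i\<in>{1..r}. ub i 0) + v) = B 0" using x0 v B0 Badd by (simp add: add.commute)
    hence "(\<Sum>i\<in>{1..r}. ub i 0) + v = 0" using injB by (meson injD)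
    moreover have "\<forall>i\<in>{1..r}. ub i 0 \<in> Eset B (Xs i)"
      using ub Tpos unfolding optimal_def admissible_def by blast
    ultimately have "v = 0" using V_indep[rule_format, of "\<lambda>i. ub i 0" v] v by simp
    thus "y = 0" using v B0 by simp
  qed
  moreover have "0 \<in> range A \<inter> B ` V" 
  proof
    show "0 \<in> range A" using A0 by (metis rangeI)
    show "0 \<in> B ` V" using B0 V0 by (metis image_eqI)
  qed
  ultimately show ?thesis by blast
qed

end
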